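(* Let $\mathcal{H}$ be a real Hilbert space, let $N\geq 1$, let $f_1,\ldots,f_N\in\Gamma_0(\mathcal{H})$, and let $\mathcal{P}\subset\Delta_N$ be a nonempty closed convex set. Define $f\colon\mathcal{H}^N\to\mathbb{R}\cup\{+\infty\}$ by $f(\mathbf{x})=\sup_{p\in\mathcal{P}}\sum_{i=1}^N p_i f_i(x_i)$ for $\mathbf{x}=(x_1,\ldots,x_N)$. Let $\mathbf{x}\in\mathcal{H}^N$ and $\lambda>0$. Then the following hold. (i) If for every $i\in\{1,\ldots,N\}$, $f_i(x)=\langle a_i,x\rangle+\xi_i$ with $a_i\in\mathcal{H}\setminus\{0\}$ and $\xi_i\in\mathbb{R}$, then the problem $\min_{p\in\mathcal{P}}\frac12 p^\top Dp-p^\top\beta$, where $D=\mathrm{diag}(\lambda\|a_1\|^2,\ldots,\lambda\|a_N\|^2)$ and $\beta=(\langle a_i,x_i\rangle+\xi_i)_{i=1}^N$, has a unique solution $\overline{p}\in\mathcal{P}$, and $P_\lambda f(\mathbf{x})=(x_i-\lambda\overline{p}_i a_i)_{i=1}^N$. (ii) If $\mathcal{P}=\Delta_N$ and for every $i\in\{1,\ldots,N\}$, $f_i(x)=\|x-\xi_i\|^2$ with $\xi_i\in\mathcal{H}$, then $P_\lambda f(\mathbf{x})=\left(\frac{x_i+2\lambda\overline{p}_i\xi_i}{2\lambda\overline{p}_i+1}\right)_{i=1}^N$, where $\overline{p}\in\Delta_N$ is any solution of $\max_{p\in\Delta_N}\ell(p):=\sum_{i=1}^N\frac{p_i}{1+2\lambda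 p_i}\alpha_i$ with $\alpha_i=\|x_i-\xi_i\|^2$ for every $i$.
   Context: $\Gamma_0(\mathcal{H})$ is the set of proper, lower semicontinuous, convex functions $\mathcal{H}\to\mathbb{R}\cup\{+\infty\}$. $\Delta_N=\{p\in\mathbb{R}_+^N:\sum_{i=1}^Np_i=1\}$. For $g\in\Gamma_0(\mathcal{G})$ and $\lambda>0$, the proximity operator is $P_\lambda g(x)=\operatorname{argmin}_{y}\{g(y)+\frac{1}{2\lambda}\|x-y\|^2\}$. $\mathcal{H}^N$ carries the product Hilbert structure. *)

theory Defs
  imports "HOL-Analysis.Analysis"
begin

definition proper_fun :: "('a \<Rightarrow> ereal) \<Rightarrow> bool" where
  "proper_fun g \<longleftrightarrow> (\<forall>x. g x \<noteq> -\<infinity>) \<and> (\<exists>x. g x \<noteq> \<infinity>)"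

definition lsc_fun :: "('a::topological_space \<Rightarrow> ereal) \<Rightarrow> bool" where
  "lsc_fun g \<longleftrightarrow> (\<forall>x. \<forall>c. c < g x \<longrightarrow> eventually (\<lambda>y. c < g y) (nhds x))"

definition convex_fun :: "('a::real_vector \<Rightarrow> ereal) \<Rightarrow> bool" where
  "convex_fun g \<longleftrightarrow> (\<forall>x y t. 0 \<le> t \<and> t \<le> 1 \<longrightarrow>
      g ((1 - t) *\<^sub>R x + t *\<^sub>R y) \<le> ereal (1 - t) * g x + ereal t * g y)"

definition Gamma0 :: "('a::real_normed_vector \<Rightarrow> ereal) \<Rightarrow> bool" where
  "Gamma0 g \<longleftrightarrow> proper_fun g \<and> lsc_fun g \<and> convex_fun g"

text \<open>The probability simplex \<Delta>_N, with N = CARD('n).\<close>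
definition simplex_set :: "(real ^ 'n::finite) set" where
  "simplex_set = {p. (\<forall>i. 0 \<le> p $ i) \<and> (\<Sum>i\<in>UNIV. p $ i) = 1}"

definition prox :: "real \<Rightarrow> ('a::real_inner \<Rightarrow> ereal) \<Rightarrow> 'a \<Rightarrow> 'a" where
  "prox lam g x = (THE y. \<forall>z. g y + ereal (norm (x - y)^2 / (2 * lam))
                              \<le> g z + ereal (norm (x - z)^2 / (2 * lam)))"

end

theory Submission
  imports Defs
begin


lemma small_t:
  fixes G C :: real
  assumes "\<And>t. 0 < t \<Longrightarrow> t \<le> 1 \<Longrightarrow> G \<le> t * C"
  shows "G \<le> 0"
proof (rule ccontr)
  assume g: "\<not> G \<le> 0"
  show False
  proof (cases "C \<le> 0")
    case True
    then show False using assms[of 1] g by simp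
  next
    case False
    define t where "t = min 1 (G / (2 * C))"
    have "0 < t" "t \<le> 1" using g False by (auto simp: t_def)
    hence "G \<le> t * C" by (rule assms)
    also have "\<dots> \<le> G / (2 * C) * C" using False by (intro mult_right_mono) (auto simp: t_def)
    also have "\<dots> = G / 2" using False by simp
    finally show False using g by simp
  qed
qed

lemma prox_eqI:
  fixes F :: "'b::real_inner \<Rightarrow> ereal"
  assumes lam: "lam > 0" and Fy: "F y \<le> ereal A" and FB: "\<And>z. ereal (B z) \<le> F z"
    and ineq: "\<And>z. A + norm (x - y)^2 / (2*lam) + norm (z - y)^2 / (2*lam) \<le> B z + norm (x - z)^2 / (2*lam)"
  shows "prox lam F x = y"
proof -
  have "A \<le> B y" using ineq[of y] by simp
  hence "ereal A \<le> F y" using FB[of y] by (meson ereal_less_eq(3) order_trans)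
  hence FyA: "F y = ereal A" using Fy by simp
  show ?thesis unfolding prox_def
  proof (rule the_equality)
    show "\<forall>z. F y + ereal (norm (x - y)^2 / (2 * lam)) \<le> F z + ereal (norm (x - z)^2 / (2 * lam))"
    proof
      fix z
      have "F y + ereal (norm (x - y)^2 / (2 * lam)) = ereal (A + norm (x - y)^2 / (2 * lam))"
        using FyA by simp
      also have "\<dots> \<le> ereal (B z + norm (x - z)^2 / (2 * lam))"
        using ineq[of z] lam
          by (simp, smt (verit) divide_nonneg_pos zero_le_power2)
      also have "\<dots> = ereal (B z) + ereal (norm (x - z)^2 / (2 * lam))" by simp
      also have "\<dots> \<le> F z + ereal (norm (x - z)^2 / (2 * lam))"
        by (intro add_right_mono FB)
      finally show "F y + ereal (norm (x - y)^2 / (2 * lam)) \<le> F z + ereal (norm (x - z)^2 / (2 * lam))" .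
    qed
  next
    fix y'
    assume h: "\<forall>z. F y' + ereal (norm (x - y')^2 / (2 * lam)) \<le> F z + ereal (norm (x - z)^2 / (2 * lam))"
    have "ereal (A + norm (x - y)^2 / (2*lam) + norm (y' - y)^2 / (2*lam)) \<le> ereal (B y' + norm (x - y')^2 / (2*lam))"
      using ineq[of y'] by simp
    also have "\<dots> = ereal (B y') + ereal (norm (x - y')^2 / (2*lam))" by simp
    also have "\<dots> \<le> F y' + ereal (norm (x - y')^2 / (2*lam))"
      by (intro add_right_mono FB)
    also have "\<dots> \<le> F y + ereal (norm (x - y)^2 / (2 * lam))" using h by blast
    also have "\<dots> = ereal (A + norm (x - y)^2 / (2*lam))" using FyA by simp
    finally have "norm (y' - y)^2 / (2*lam) \<le> 0" by simp
    hence "norm (y' - y)^2 \<le> 0" using lam by (simp add: divide_le_0_iff)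
    thus "y' = y" by simp
  qed
qed

lemma norm_vec_sq: "norm (v :: 'a::real_inner ^ 'n)^2 = (\<Sum>i\<in>UNIV. norm (v $ i)^2)"
  by (simp add: power2_norm_eq_inner inner_vec_def)



lemma comp1:
  fixes xi yi zi ai :: "'a::real_inner"
  assumes lam: "lam > 0" and y: "yi = xi - (lam * p) *\<^sub>R ai"
  shows "p * (inner ai yi + s) + norm (xi - yi)^2 / (2*lam) + norm (zi - yi)^2 / (2*lam)
       = p * (inner ai zi + s) + norm (xi - zi)^2 / (2*lam)"
proof -
  have "norm (xi - zi)^2 = norm ((xi - yi) + (yi - zi))^2" by simp
  also have "\<dots> = norm (xi - yi)^2 + 2 * inner (xi - yi) (yi - zi) + norm (zi - yi)^2"
    by (simp add: power2_norm_eq_inner inner_simps algebra_simps inner_commute)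
  finally have e: "norm (xi - zi)^2 = norm (xi - yi)^2 + 2 * inner (xi - yi) (yi - zi) + norm (zi - yi)^2" .
  have "xi - yi = (lam * p) *\<^sub>R ai" using y by simp
  hence "inner (xi - yi) (yi - zi) = lam * p * (inner ai yi - inner ai zi)" by (simp add: inner_diff_right algebra_simps)
  thus ?thesis using e lam by (simp add: field_simps)
qed

lemma quad_VI:
  fixes S :: "(real^'n::finite) set" and w b :: "'n \<Rightarrow> real"
  assumes S: "convex S" "p0 \<in> S" "p \<in> S"
    and min: "\<forall>p\<in>S. (\<Sum>i\<in>UNIV. (1/2)*w i*(p0$i)^2 - p0$i*b i) \<le> (\<Sum>i\<in>UNIV. (1/2)*w i*(p$i)^2 - p$i*b i)"
  shows "0 \<le> (\<Sum>i\<in>UNIV. (p$i - p0$i) * (w i * p0$i - b i))"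
proof -
  define G where "G = (\<Sum>i\<in>UNIV. (p$i - p0$i) * (w i * p0$i - b i))"
  define C where "C = (\<Sum>i\<in>UNIV. (1/2)*w i*(p$i - p0$i)^2)"
  define Q where "Q = (\<lambda>p::real^'n. \<Sum>i\<in>UNIV. (1/2)*w i*(p$i)^2 - p$i*b i)"
  have "- G \<le> 0"
  proof (rule small_t[where C = C])
    fix t :: real assume t: "0 < t" "t \<le> 1"
    define pt where "pt = (1 - t) *\<^sub>R p0 + t *\<^sub>R p"
    have "pt \<in> S" unfolding pt_def using S t by (intro convexD) auto
    hence "Q p0 \<le> Q pt" using min by (simp add: Q_def)
    moreover have "Q pt - Q p0 = t * G + t^2 * C"
    proof -
      have "Q pt - Q p0 = (\<Sum>i\<in>UNIV. t * ((p$i - p0$i) * (w i * p0$i - b i)) + t^2 * ((1/2)*w i*(p$i - p0$i)^2))"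
        unfolding Q_def sum_subtractf[symmetric]
        by (rule sum.cong) (auto simp: pt_def algebra_simps power2_eq_square)
      also have "\<dots> = t * G + t^2 * C"
        by (simp add: G_def C_def sum.distrib sum_distrib_left)
      finally show ?thesis .
    qed
    ultimately have "0 \<le> t * (G + t * C)" by (simp add: power2_eq_square algebra_simps)
    hence "0 \<le> G + t * C" using t by (simp add: zero_le_mult_iff)
    thus "- G \<le> t * C" by simp
  qed
  thus ?thesis by (simp add: G_def)
qed

lemma simplex_bounded: "simplex_set \<subseteq> cbox (0::real^'n::finite) (\<chi> i. 1)"
proof
  fix p :: "real^'n" assume p: "p \<in> simplex_set"
  have "\<And>i. p$i \<le> 1"
  proof -
    fix i
    have "p$i \<le> (\<Sum>j\<in>UNIV. p$j)" using p by (intro member_le_sum) (auto simp: simplex_set_def)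
    thus "p$i \<le> 1" using p by (simp add: simplex_set_def)
  qed
  thus "p \<in> cbox 0 (\<chi> i. 1)" using p by (auto simp: mem_box_cart simplex_set_def)
qed



lemma part1:
  fixes f :: "'n::finite \<Rightarrow> 'a::{real_inner, complete_space} \<Rightarrow> ereal"
    and P :: "(real ^ 'n) set"
    and F :: "'a ^ 'n \<Rightarrow> ereal"
    and x :: "'a ^ 'n"
    and lam :: real
    and a :: "'n \<Rightarrow> 'a" and \<xi> :: "'n \<Rightarrow> real"
  assumes hP: "P \<noteq> {}" "closed P" "convex P" "P \<subseteq> simplex_set"
    and hF: "F = (\<lambda>y. SUP p\<in>P. \<Sum>i\<in>UNIV. ereal (p $ i) * f i (y $ i))"
    and hlam: "lam > 0"
    and ha: "\<forall>i. a i \<noteq> 0" and hfa: "\<forall>i. f i = (\<lambda>z. ereal (inner (a i) z + \<xi> i))"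
  shows
        "(let D = (\<chi> i j. if i = j then lam * (norm (a i))^2 else 0) :: real ^ 'n ^ 'n;
             \<beta> = (\<chi> i. inner (a i) (x $ i) + \<xi> i) :: real ^ 'n;
             q = (\<lambda>p :: real ^ 'n. (1/2) * (p \<bullet> (D *v p)) - p \<bullet> \<beta>)
         in \<exists>pb. (\<forall>p'. (p' \<in> P \<and> (\<forall>p\<in>P. q p' \<le> q p)) \<longleftrightarrow> p' = pb) \<and>
                 prox lam F x = (\<chi> i. x $ i - (lam * pb $ i) *\<^sub>R a i))"
proof -
  define w where "w = (\<lambda>i. lam * (norm (a i))^2)"
  define b where "b = (\<lambda>i. inner (a i) (x $ i) + \<xi> i)"
  define Q where "Q = (\<lambda>p::real^'n. \<Sum>i\<in>UNIV. (1/2)*w i*(p$i)^2 - p$i*b i)"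
  have qeq: "(1/2) * (p \<bullet> ((\<chi> i j. if i = j then lam * (norm (a i))^2 else 0) *v p))
      - p \<bullet> (\<chi> i. inner (a i) (x $ i) + \<xi> i) = Q p" for p :: "real^'n"
  proof -
    have "((\<chi> i j. if i = j then lam * (norm (a i))^2 else 0) *v p) $ i = w i * p $ i" for i
    proof -
      have "((\<chi> i j. if i = j then lam * (norm (a i))^2 else 0) *v p) $ i
          = (\<Sum>j\<in>UNIV. if i = j then w i * p $ j else 0)"
        unfolding matrix_vector_mult_def w_def vec_lambda_beta by (rule sum.cong) auto
      also have "\<dots> = w i * p $ i" by (simp add: sum.delta)
      finally show ?thesis .
    qed
    thus ?thesis
      by (simp add: Q_def b_def inner_vec_def sum_subtractf sum_distrib_left power2_eq_square algebra_simps)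
  qed
  have wpos: "w i > 0" for i using ha hlam by (simp add: w_def)
  have cP: "compact P"
    using hP simplex_bounded bounded_cbox bounded_subset compact_eq_bounded_closed by metis
  have "continuous_on P Q" unfolding Q_def by (intro continuous_intros)
  then obtain pb where pbP: "pb \<in> P" and pbmin: "\<forall>p\<in>P. Q pb \<le> Q p"
    using continuous_attains_inf[OF cP hP(1)] by blast
  have VI: "0 \<le> (\<Sum>i\<in>UNIV. (p$i - p0$i) * (w i * p0$i - b i))"
    if "p0 \<in> P" "\<forall>p\<in>P. Q p0 \<le> Q p" "p \<in> P" for p0 p
    using quad_VI[OF hP(3) that(1) that(3)] that(2) by (simp add: Q_def)
  have uniq: "p' = pb" if "p' \<in> P" "\<forall>p\<in>P. Q p' \<le> Q p" for p'
  proof -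
    have 1: "0 \<le> (\<Sum>i\<in>UNIV. (pb$i - p'$i) * (w i * p'$i - b i))" using VI that pbP by blast
    have 2: "0 \<le> (\<Sum>i\<in>UNIV. (p'$i - pb$i) * (w i * pb$i - b i))" using VI that pbP pbmin by blast
    have "(\<Sum>i\<in>UNIV. (pb$i - p'$i) * (w i * p'$i - b i)) + (\<Sum>i\<in>UNIV. (p'$i - pb$i) * (w i * pb$i - b i))
       = - (\<Sum>i\<in>UNIV. w i * (p'$i - pb$i)^2)"
      by (simp add: sum.distrib[symmetric] sum_negf[symmetric], rule sum.cong)
         (auto simp: algebra_simps power2_eq_square)
    hence le: "(\<Sum>i\<in>UNIV. w i * (p'$i - pb$i)^2) \<le> 0" using 1 2 by linarith
    have nn: "\<And>i. i\<in>UNIV \<Longrightarrow> 0 \<le> w i * (p'$i - pb$i)^2" using wpos by (simp add: less_imp_le)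
    have "0 \<le> (\<Sum>i\<in>UNIV. w i * (p'$i - pb$i)^2)" by (rule sum_nonneg) (rule nn)
    hence "(\<Sum>i\<in>UNIV. w i * (p'$i - pb$i)^2) = 0" using le by linarith
    hence "\<forall>i\<in>UNIV. w i * (p'$i - pb$i)^2 = 0"
      by (subst (asm) sum_nonneg_eq_0_iff) (auto intro: nn)
    thus ?thesis using wpos by (auto simp: vec_eq_iff) (metis less_irrefl)
  qed
  define y where "y = (\<chi> i. x $ i - (lam * pb $ i) *\<^sub>R a i)"
  define A where "A = (\<Sum>i\<in>UNIV. pb$i * (inner (a i) (y$i) + \<xi> i))"
  define B where "B = (\<lambda>z::'a^'n. \<Sum>i\<in>UNIV. pb$i * (inner (a i) (z$i) + \<xi> i))"
  have Fval: "(\<Sum>i\<in>UNIV. ereal (p $ i) * f i (z $ i)) = ereal (\<Sum>i\<in>UNIV. p$i * (inner (a i) (z$i) + \<xi> i))"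
    for p :: "real^'n" and z :: "'a^'n"
    using hfa by simp
  have "prox lam F x = y"
  proof (rule prox_eqI[OF hlam, where A = A and B = B])
    show "F y \<le> ereal A" unfolding hF
    proof (rule SUP_least)
      fix p assume pP: "p \<in> P"
      have ry: "inner (a i) (y$i) + \<xi> i = b i - w i * pb$i" for i
        by (simp add: y_def b_def w_def inner_diff_right power2_norm_eq_inner algebra_simps)
      have "0 \<le> (\<Sum>i\<in>UNIV. (p$i - pb$i) * (w i * pb$i - b i))" using VI pbP pbmin pP by blast
      moreover have "A - (\<Sum>i\<in>UNIV. p$i * (inner (a i) (y$i) + \<xi> i))
          = (\<Sum>i\<in>UNIV. (p$i - pb$i) * (w i * pb$i - b i))"
        unfolding A_def ry sum_subtractf[symmetric] by (rule sum.cong) (auto simp: algebra_simps)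
      ultimately have "(\<Sum>i\<in>UNIV. p$i * (inner (a i) (y$i) + \<xi> i)) \<le> A" by linarith
      thus "(\<Sum>i\<in>UNIV. ereal (p $ i) * f i (y $ i)) \<le> ereal A" unfolding Fval by simp
    qed
  next
    fix z :: "'a^'n"
    show "ereal (B z) \<le> F z" unfolding hF B_def Fval[symmetric]
      using pbP by (rule SUP_upper)
  next
    fix z :: "'a^'n"
    have "A + norm (x - y)^2 / (2*lam) + norm (z - y)^2 / (2*lam)
       = (\<Sum>i\<in>UNIV. pb$i * (inner (a i) (y$i) + \<xi> i) + norm (x$i - y$i)^2 / (2*lam) + norm (z$i - y$i)^2 / (2*lam))"
      by (simp add: A_def norm_vec_sq sum.distrib sum_divide_distrib)
    also have "\<dots> = (\<Sum>i\<in>UNIV. pb$i * (inner (a i) (z$i) + \<xi> i) + norm (x$i - z$i)^2 / (2*lam))"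
      by (rule sum.cong[OF refl], rule comp1[OF hlam]) (simp add: y_def)
    also have "\<dots> = B z + norm (x - z)^2 / (2*lam)"
      by (simp add: B_def norm_vec_sq sum.distrib sum_divide_distrib)
    finally show "A + norm (x - y)^2 / (2*lam) + norm (z - y)^2 / (2*lam) \<le> B z + norm (x - z)^2 / (2*lam)"
      by simp
  qed
  show ?thesis unfolding Let_def qeq
    using uniq pbP pbmin \<open>prox lam F x = y\<close> unfolding y_def by blast
qed



lemma nsq_diff: "norm (a - b)^2 = norm a^2 - 2 * inner a b + norm (b::'a::real_inner)^2"
  by (simp add: power2_norm_eq_inner inner_diff_left inner_diff_right inner_commute)

lemma nsq_add: "norm (a + b)^2 = norm a^2 + 2 * inner a b + norm (b::'a::real_inner)^2"
  by (simp add: power2_norm_eq_inner inner_add_left inner_add_right inner_commute)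

lemma comp2:
  fixes xi yi zi ci :: "'a::real_inner"
  assumes lam: "lam > 0" and p: "p \<ge> 0" and y: "yi = (1 / (2 * lam * p + 1)) *\<^sub>R (xi + (2 * lam * p) *\<^sub>R ci)"
  shows "p * norm (yi - ci)^2 + norm (xi - yi)^2 / (2*lam) + norm (zi - yi)^2 / (2*lam)
       \<le> p * norm (zi - ci)^2 + norm (xi - zi)^2 / (2*lam)"
proof -
  define v where "v = yi - ci"
  define w where "w = zi - yi"
  have u: "2 * lam * p + 1 > 0" using lam p by (simp add: add_nonneg_pos)
  have "(2 * lam * p + 1) *\<^sub>R yi = xi + (2 * lam * p) *\<^sub>R ci" using y u by simp
  hence key: "xi - yi = (2 * lam * p) *\<^sub>R v" unfolding v_def by (simp add: algebra_simps)
  have e1: "norm (zi - ci)^2 = norm w ^2 + 2 * inner w v + norm v^2"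
  proof -
    have "zi - ci = w + v" by (simp add: v_def w_def)
    show ?thesis unfolding \<open>zi - ci = w + v\<close> by (rule nsq_add)
  qed
  have e2: "norm (xi - zi)^2 = norm (xi - yi)^2 - 2 * inner (xi - yi) w + norm w^2"
  proof -
    have "xi - zi = (xi - yi) - w" by (simp add: w_def)
    show ?thesis unfolding \<open>xi - zi = (xi - yi) - w\<close> by (rule nsq_diff)
  qed
  have e3: "inner (xi - yi) w = 2 * lam * p * inner v w" using key by simp
  have "p * norm (zi - ci)^2 + norm (xi - zi)^2 / (2*lam)
      - (p * norm (yi - ci)^2 + norm (xi - yi)^2 / (2*lam) + norm (zi - yi)^2 / (2*lam))
      = p * norm w^2"
    unfolding e1 e2 e3 using lam by (simp add: v_def[symmetric] w_def[symmetric] field_simps inner_commute)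
  thus ?thesis using p by (smt (verit) zero_le_mult_iff zero_le_power2)
qed



lemma term_ineq:
  fixes s pb t d al lam :: real
  assumes lam: "lam > 0" and s: "s \<ge> 0" and pb: "pb \<ge> 0" and sd: "s = pb + t * d" and al: "al \<ge> 0"
  shows "s / (1 + 2*lam * s) * al - pb / (1 + 2*lam*pb) * al
       \<ge> al * (t * d / (1 + 2*lam*pb)^2) - al * (t^2 * (2 * lam * d^2))"
proof -
  define u where "u = 1 + 2*lam*pb"
  define v where "v = 1 + 2*lam * s"
  have u1: "u \<ge> 1" and v1: "v \<ge> 1" using lam s pb by (auto simp: u_def v_def)
  have "s / v - pb / u = t * d / (u * v)" using u1 v1 by (simp add: field_simps u_def v_def sd)
  moreover have "t * d / (u * v) - t * d / u^2 = - (2 * lam * t^2 * d^2) / (u^2 * v)"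
  proof -
    have "t * d / (u * v) - t * d / u^2 = t * d * (u - v) / (u^2 * v)"
      using u1 v1 by (simp add: field_simps power2_eq_square)
    moreover have "u - v = - (2 * lam * t * d)" by (simp add: u_def v_def sd algebra_simps)
    ultimately show ?thesis by (simp add: power2_eq_square)
  qed
  moreover have "(2 * lam * t^2 * d^2) / (u^2 * v) \<le> 2 * lam * t^2 * d^2"
  proof -
    have "1 \<le> u^2" using u1 by (simp add: one_le_power)
    hence "1 * 1 \<le> u^2 * v" using v1 by (intro mult_mono) auto
    moreover have "0 \<le> 2 * lam * t^2 * d^2" using lam by simp
    ultimately show ?thesis using divide_left_mono[of 1 "u^2 * v" "2 * lam * t^2 * d^2"] by simp
  qed
  ultimately have "s / v - pb / u \<ge> t * d / u^2 - t^2 * (2 * lam * d^2)" by (simp add: algebra_simps)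
  hence "al * (s / v - pb / u) \<ge> al * (t * d / u^2 - t^2 * (2 * lam * d^2))"
    using al by (rule mult_left_mono)
  thus ?thesis by (simp add: u_def v_def algebra_simps)
qed



lemma simplex_convex: "convex (simplex_set :: (real^'n::finite) set)"
  unfolding convex_def simplex_set_def
  by (auto simp: sum.distrib sum_distrib_left[symmetric])

lemma ell_VI:
  fixes pb p :: "real^'n::finite" and al :: "'n \<Rightarrow> real"
  assumes lam: "lam > 0" and pb: "pb \<in> simplex_set" and p: "p \<in> simplex_set" and al: "\<And>i. al i \<ge> 0"
    and max: "\<forall>p\<in>simplex_set. (\<Sum>i\<in>UNIV. p $ i / (1 + 2 * lam * p $ i) * al i)
                  \<le> (\<Sum>i\<in>UNIV. pb $ i / (1 + 2 * lam * pb $ i) * al i)"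
  shows "(\<Sum>i\<in>UNIV. (p$i - pb$i) * (al i / (1 + 2*lam*pb$i)^2)) \<le> 0"
proof -
  define G where "G = (\<Sum>i\<in>UNIV. (p$i - pb$i) * (al i / (1 + 2*lam*pb$i)^2))"
  define K where "K = (\<Sum>i\<in>UNIV. 2 * lam * al i * (p$i - pb$i)^2)"
  define ell where "ell = (\<lambda>p::real^'n. \<Sum>i\<in>UNIV. p $ i / (1 + 2 * lam * p $ i) * al i)"
  have "G \<le> 0"
  proof (rule small_t[where C = K])
    fix t :: real assume t: "0 < t" "t \<le> 1"
    define pt where "pt = (1 - t) *\<^sub>R pb + t *\<^sub>R p"
    have ptS: "pt \<in> simplex_set" unfolding pt_def using simplex_convex pb p t by (intro convexD) auto
    hence "ell pt \<le> ell pb" using max by (simp add: ell_def)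
    moreover have "ell pt - ell pb \<ge> (\<Sum>i\<in>UNIV. al i * (t * (p$i - pb$i) / (1 + 2*lam*pb$i)^2) - al i * (t^2 * (2 * lam * (p$i - pb$i)^2)))"
      unfolding ell_def sum_subtractf[symmetric]
    proof (rule sum_mono)
      fix i
      show "al i * (t * (p$i - pb$i) / (1 + 2*lam*pb$i)^2) - al i * (t^2 * (2 * lam * (p$i - pb$i)^2))
          \<le> pt $ i / (1 + 2 * lam * pt $ i) * al i - pb $ i / (1 + 2 * lam * pb $ i) * al i"
        using ptS pb by (intro term_ineq[OF lam _ _ _ al]) (auto simp: simplex_set_def pt_def algebra_simps)
    qed
    moreover have "(\<Sum>i\<in>UNIV. al i * (t * (p$i - pb$i) / (1 + 2*lam*pb$i)^2) - al i * (t^2 * (2 * lam * (p$i - pb$i)^2)))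
       = t * G - t^2 * K"
      by (simp add: G_def K_def sum_subtractf sum_distrib_left algebra_simps)
    ultimately have "t * G \<le> t * (t * K)" by (simp add: power2_eq_square)
    thus "G \<le> t * K" using t by simp
  qed
  thus ?thesis by (simp add: G_def)
qed



lemma part2:
  fixes f :: "'n::finite \<Rightarrow> 'a::{real_inner, complete_space} \<Rightarrow> ereal"
    and P :: "(real ^ 'n) set"
    and F :: "'a ^ 'n \<Rightarrow> ereal"
    and x :: "'a ^ 'n"
    and lam :: real
    and c :: "'n \<Rightarrow> 'a"
  assumes hF: "F = (\<lambda>y. SUP p\<in>P. \<Sum>i\<in>UNIV. ereal (p $ i) * f i (y $ i))"
    and hlam: "lam > 0"
    and hPs: "P = simplex_set" and hfc: "\<forall>i. f i = (\<lambda>z. ereal ((norm (z - c i))^2))"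
  shows
        "(let \<alpha> = (\<lambda>i. (norm (x $ i - c i))^2);
             ell = (\<lambda>p :: real ^ 'n. \<Sum>i\<in>UNIV. p $ i / (1 + 2 * lam * p $ i) * \<alpha> i)
         in \<forall>pb. pb \<in> simplex_set \<and> (\<forall>p\<in>simplex_set. ell p \<le> ell pb) \<longrightarrow>
              prox lam F x =
                (\<chi> i. (1 / (2 * lam * pb $ i + 1)) *\<^sub>R (x $ i + (2 * lam * pb $ i) *\<^sub>R c i)))"
  unfolding Let_def
proof (intro allI impI, elim conjE)
  fix pb :: "real^'n"
  define al where "al = (\<lambda>i. (norm (x $ i - c i))^2)"
  assume pbS: "pb \<in> simplex_set"
    and max: "\<forall>p\<in>simplex_set. (\<Sum>i\<in>UNIV. p $ i / (1 + 2 * lam * p $ i) * (norm (x $ i - c i))^2)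
                  \<le> (\<Sum>i\<in>UNIV. pb $ i / (1 + 2 * lam * pb $ i) * (norm (x $ i - c i))^2)"
  have pb0: "pb $ i \<ge> 0" for i using pbS by (simp add: simplex_set_def)
  define y where "y = (\<chi> i. (1 / (2 * lam * pb $ i + 1)) *\<^sub>R (x $ i + (2 * lam * pb $ i) *\<^sub>R c i))"
  define A where "A = (\<Sum>i\<in>UNIV. pb$i * norm (y$i - c i)^2)"
  define B where "B = (\<lambda>z::'a^'n. \<Sum>i\<in>UNIV. pb$i * norm (z$i - c i)^2)"
  have Fval: "(\<Sum>i\<in>UNIV. ereal (p $ i) * f i (z $ i)) = ereal (\<Sum>i\<in>UNIV. p$i * norm (z$i - c i)^2)"
    for p :: "real^'n" and z :: "'a^'n"
    using hfc by simp
  have gam: "norm (y$i - c i)^2 = al i / (1 + 2*lam*pb$i)^2" for i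
  proof -
    have u: "2 * lam * pb $ i + 1 > 0" using hlam pb0[of i] by (simp add: add_nonneg_pos)
    have yy: "(2 * lam * pb $ i + 1) *\<^sub>R y $ i = x $ i + (2 * lam * pb $ i) *\<^sub>R c i"
      using u by (simp add: y_def)
    have "(2 * lam * pb $ i + 1) *\<^sub>R (y $ i - c i)
        = (2 * lam * pb $ i + 1) *\<^sub>R y $ i - (2 * lam * pb $ i + 1) *\<^sub>R c i"
      by (simp only: scaleR_diff_right)
    also have "\<dots> = x $ i + (2 * lam * pb $ i) *\<^sub>R c i - (2 * lam * pb $ i + 1) *\<^sub>R c i"
      by (simp only: yy)
    also have "\<dots> = x $ i - c i" by (simp add: scaleR_add_left)
    finally have "(2 * lam * pb $ i + 1) *\<^sub>R (y $ i - c i) = x $ i - c i" .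
    hence "(2 * lam * pb $ i + 1) * norm (y $ i - c i) = norm (x $ i - c i)"
      using u by (metis norm_scaleR abs_of_pos)
    hence "norm (y$i - c i) = norm (x $ i - c i) / (2 * lam * pb $ i + 1)"
      using u by (simp add: field_simps)
    thus ?thesis by (simp add: al_def power_divide add.commute)
  qed
  have "prox lam F x = y"
  proof (rule prox_eqI[OF hlam, where A = A and B = B])
    show "F y \<le> ereal A" unfolding hF
    proof (rule SUP_least)
      fix p assume pP: "p \<in> P"
      have "(\<Sum>i\<in>UNIV. (p$i - pb$i) * (al i / (1 + 2*lam*pb$i)^2)) \<le> 0"
        using ell_VI[OF hlam pbS, of p al] pP hPs max by (simp add: al_def)
      moreover have "(\<Sum>i\<in>UNIV. p$i * norm (y$i - c i)^2) - A
          = (\<Sum>i\<in>UNIV. (p$i - pb$i) * (al i / (1 + 2*lam*pb$i)^2))"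
        unfolding A_def gam sum_subtractf[symmetric] by (rule sum.cong) (auto simp: algebra_simps add_divide_distrib[symmetric])
      ultimately have "(\<Sum>i\<in>UNIV. p$i * norm (y$i - c i)^2) \<le> A" by linarith
      thus "(\<Sum>i\<in>UNIV. ereal (p $ i) * f i (y $ i)) \<le> ereal A" unfolding Fval by simp
    qed
  next
    fix z :: "'a^'n"
    show "ereal (B z) \<le> F z" unfolding hF B_def Fval[symmetric]
      using pbS hPs by (intro SUP_upper) auto
  next
    fix z :: "'a^'n"
    have "A + norm (x - y)^2 / (2*lam) + norm (z - y)^2 / (2*lam)
       = (\<Sum>i\<in>UNIV. pb$i * norm (y$i - c i)^2 + norm (x$i - y$i)^2 / (2*lam) + norm (z$i - y$i)^2 / (2*lam))"
      by (simp add: A_def norm_vec_sq sum.distrib sum_divide_distrib)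
    also have "\<dots> \<le> (\<Sum>i\<in>UNIV. pb$i * norm (z$i - c i)^2 + norm (x$i - z$i)^2 / (2*lam))"
      by (rule sum_mono, rule comp2[OF hlam pb0]) (simp add: y_def)
    also have "\<dots> = B z + norm (x - z)^2 / (2*lam)"
      by (simp add: B_def norm_vec_sq sum.distrib sum_divide_distrib)
    finally show "A + norm (x - y)^2 / (2*lam) + norm (z - y)^2 / (2*lam) \<le> B z + norm (x - z)^2 / (2*lam)" .
  qed
  thus "prox lam F x = (\<chi> i. (1 / (2 * lam * pb $ i + 1)) *\<^sub>R (x $ i + (2 * lam * pb $ i) *\<^sub>R c i))"
    by (simp add: y_def)
qed


theorem proposition2p1:
  fixes f :: "'n::finite \<Rightarrow> 'a::{real_inner, complete_space} \<Rightarrow> ereal"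
    and P :: "(real ^ 'n) set"
    and F :: "'a ^ 'n \<Rightarrow> ereal"
    and x :: "'a ^ 'n"
    and lam :: real
  assumes hf: "\<And>i. Gamma0 (f i)"
    and hP: "P \<noteq> {}" "closed P" "convex P" "P \<subseteq> simplex_set"
    and hF: "F = (\<lambda>y. SUP p\<in>P. \<Sum>i\<in>UNIV. ereal (p $ i) * f i (y $ i))"
    and hlam: "lam > 0"
  shows
    "(\<forall>(a :: 'n \<Rightarrow> 'a) (\<xi> :: 'n \<Rightarrow> real).
        (\<forall>i. a i \<noteq> 0) \<and> (\<forall>i. f i = (\<lambda>z. ereal (inner (a i) z + \<xi> i))) \<longrightarrow>
        (let D = (\<chi> i j. if i = j then lam * (norm (a i))^2 else 0) :: real ^ 'n ^ 'n;
             \<beta> = (\<chi> i. inner (a i) (x $ i) + \<xi> i) :: real ^ 'n;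
             q = (\<lambda>p :: real ^ 'n. (1/2) * (p \<bullet> (D *v p)) - p \<bullet> \<beta>)
         in \<exists>pb. (\<forall>p'. (p' \<in> P \<and> (\<forall>p\<in>P. q p' \<le> q p)) \<longleftrightarrow> p' = pb) \<and>
                 prox lam F x = (\<chi> i. x $ i - (lam * pb $ i) *\<^sub>R a i)))
     \<and>
     (\<forall>c :: 'n \<Rightarrow> 'a.
        P = simplex_set \<and> (\<forall>i. f i = (\<lambda>z. ereal ((norm (z - c i))^2))) \<longrightarrow>
        (let \<alpha> = (\<lambda>i. (norm (x $ i - c i))^2);
             ell = (\<lambda>p :: real ^ 'n. \<Sum>i\<in>UNIV. p $ i / (1 + 2 * lam * p $ i) * \<alpha> i)
         in \<forall>pb. pb \<in> simplex_set \<and> (\<forall>p\<in>simplex_set. ell p \<le> ell pb) \<longrightarrow>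
              prox lam F x =
                (\<chi> i. (1 / (2 * lam * pb $ i + 1)) *\<^sub>R (x $ i + (2 * lam * pb $ i) *\<^sub>R c i))))"
    apply (intro conjI allI impI)
   apply (erule conjE, rule part1[OF hP hF hlam], assumption+)
  apply (erule conjE, rule part2[OF hF hlam], assumption+)
  done

end
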